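(* Let $n\ge 2$, let $A_1\ldots A_n$ be a regular $n$-gon in the coordinate plane whose center is the origin, and let $f(x)$ be the monic polynomial of degree $n$ whose roots, counted with multiplicity, are the abscissas of $A_1,\ldots,A_n$. Then the coefficients of $x^{n-1},x^{n-3},x^{n-5},\ldots$ in $f(x)$ are all zero, except the constant term when $n$ is odd. *)

theory Defs
  imports Complex_Main "HOL-Computational_Algebra.Polynomial"
begin

text \<open>The coordinate plane is identified with the complex plane: the point (x,y) is x + i y,
  so the abscissa of a point z is Re z.\<close>

definition regular_ngon_centered_origin :: "nat \<Rightarrow> (nat \<Rightarrow> complex) \<Rightarrow> bool" where
  "regular_ngon_centered_origin n A \<longleftrightarrow>
     A 1 \<noteq> 0 \<and>
     (\<exists>\<sigma>::real. (\<sigma> = 1 \<or> \<sigma> = -1) \<and>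
        (\<forall>k\<in>{1..n}. A k = A 1 * cis (\<sigma> * 2 * pi * (real k - 1) / real n)))"

end

theory Submission
  imports Defs "HOL-Computational_Algebra.Fundamental_Theorem_Algebra"
begin

lemma prod_nth_roots:
  fixes u w :: complex assumes n: "n > 0"
  shows "(\<Prod>k<n. u - w * cis (2*pi*real k/real n)) = u^n - w^n"
proof (cases "w = 0")
  case True thus ?thesis using n by simp
next
  case False
  define S where "S = {z::complex. z^n = w^n}"
  have b2: "bij_betw (\<lambda>z. w * z) {z::complex. z^n = 1} S"
  proof (rule bij_betw_imageI)
    show "inj_on ((*) w) {z. z ^ n = 1}" using False by (auto simp: inj_on_def)
    show "(*) w ` {z. z ^ n = 1} = S"
    proof safe
      fix z :: complex assume "z^n = 1" thus "w*z \<in> S" by (simp add: S_def power_mult_distrib)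
    next
      fix z assume "z \<in> S"
      hence "(z/w)^n = 1" using False by (simp add: S_def power_divide)
      moreover have "z = w * (z/w)" using False by simp
      ultimately show "z \<in> (*) w ` {z. z ^ n = 1}" by blast
    qed
  qed
  have bij: "bij_betw (\<lambda>k. w * cis (2*pi*real k/real n)) {..<n} S"
    using bij_betw_trans[OF bij_betw_roots_unity[OF n] b2] by (simp add: o_def)
  have "(\<Prod>k<n. u - w * cis (2*pi*real k/real n)) = (\<Prod>z\<in>S. u - z)"
    using prod.reindex_bij_betw[OF bij, of "\<lambda>z. u - z"] by simp
  also have "\<dots> = u^n - w^n"
  proof -
    define p where "p = monom (1::complex) n - [:w^n:]"
    have pp: "poly p z = z^n - w^n" for z by (simp add: p_def poly_monom)
    have dp: "pderiv p = monom (of_nat n) (n-1)" by (simp add: p_def pderiv_monom pderiv_diff)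
    have sq: "rsquarefree p"
      unfolding rsquarefree_roots
    proof (intro allI notI)
      fix a assume "poly p a = 0 \<and> poly (pderiv p) a = 0"
      hence "a^n = w^n" "of_nat n * a^(n-1) = 0" by (auto simp: pp dp poly_monom)
      thus False using n False by (auto simp: power_0_left split: if_splits)
    qed
    have lc: "lead_coeff p = 1"
    proof -
      have c: "coeff p n = 1" using n by (cases n) (simp_all add: p_def)
      have "degree p \<le> n" unfolding p_def
        by (rule degree_diff_le) (auto simp: degree_monom_le)
      moreover have "n \<le> degree p" by (rule le_degree) (simp add: c)
      ultimately have "degree p = n" by simp
      thus ?thesis using c by simp
    qed
    have "smult (lead_coeff p) (\<Prod>z|poly p z = 0. [:-z, 1:]) = p"
      by (rule complex_poly_decompose_rsquarefree[OF sq])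
    hence "poly (\<Prod>z|poly p z = 0. [:-z, 1:]) u = poly p u" using lc by simp
    moreover have "{z. poly p z = 0} = S" by (auto simp: S_def pp)
    ultimately show ?thesis by (simp add: poly_prod pp)
  qed
  finally show ?thesis .
qed

lemma quad_cis:
  fixes c :: complex and r phi :: real
  assumes "norm c = r"
  shows "(of_real r * cis phi - c) * (of_real r * cis phi - cnj c) = 2 * (of_real r * cis phi) * of_real (r * cos phi - Re c)"
proof -
  have r2: "r^2 = (Re c)^2 + (Im c)^2" using assms by (metis cmod_power2)
  have s: "sin phi * sin phi = 1 - cos phi * cos phi"
    by (metis add_diff_cancel_right' power2_eq_square sin_cos_squared_add)
  have i: "Im c * Im c = r * r - Re c * Re c" using r2 by (simp add: power2_eq_square)
  show ?thesis
    unfolding complex_eq_iff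
    by (simp add: algebra_simps s i)
qed


lemma eval_f:
  fixes b :: complex assumes n: "n > 0" and b: "b \<noteq> 0"
  shows "poly (\<Prod>j<n. [:-Re (b * cis(2*pi*real j/real n)), 1:]) (norm b * cos phi)
          = ((norm b)^n * cos (real n * phi) - Re (b^n)) / 2^(n-1)"
proof -
  define r where "r = norm b"
  define y where "y = complex_of_real r * cis phi"
  define c where "c j = b * cis(2*pi*real j/real n)" for j
  define Y where "Y = complex_of_real (r^n) * cis (real n * phi)"
  have y0: "y \<noteq> 0" using b by (simp add: y_def r_def)
  have nc: "norm (c j) = r" for j by (simp add: c_def r_def norm_mult)
  have "complex_of_real (poly (\<Prod>j<n. [:-Re (b * cis(2*pi*real j/real n)), 1:]) (r * cos phi))
        = (\<Prod>j<n. complex_of_real (r*cos phi - Re (c j)))" unfolding poly_prod of_real_prod by (rule prod.cong[OF refl]) (simp add: c_def)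
  also have "\<dots> = (\<Prod>j<n. (y - c j) * (y - cnj (c j)) / (2*y))"
  proof (rule prod.cong[OF refl])
    fix j
    show "complex_of_real (r*cos phi - Re (c j)) = (y - c j) * (y - cnj (c j)) / (2*y)"
      using quad_cis[OF nc[of j], of phi] y0 by (simp add: y_def field_simps)
  qed
  also have "\<dots> = (\<Prod>j<n. y - c j) * (\<Prod>j<n. y - cnj (c j)) / (2*y)^n"
    by (simp add: prod.distrib prod_dividef)
  also have "(\<Prod>j<n. y - c j) = y^n - b^n" unfolding c_def by (rule prod_nth_roots[OF n])
  also have "(\<Prod>j<n. y - cnj (c j)) = y^n - cnj b ^ n"
  proof -
    have "(\<Prod>j<n. cnj y - c j) = cnj y ^ n - b^n" unfolding c_def by (rule prod_nth_roots[OF n])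
    hence "cnj (\<Prod>j<n. cnj y - c j) = cnj (cnj y ^ n - b^n)" by simp
    thus ?thesis by simp
  qed
  also have "y^n = Y" by (simp add: y_def Y_def power_mult_distrib DeMoivre)
  also have "(Y - b^n) * (Y - cnj b ^ n) = 2 * Y * complex_of_real (r^n * cos (real n * phi) - Re (b^n))"
    using quad_cis[of "b^n" "r^n" "real n * phi"] by (simp add: Y_def r_def norm_power)
  also have "(2*y)^n = 2^n * Y" by (simp add: power_mult_distrib \<open>y^n = Y\<close>)
  finally have "complex_of_real (poly (\<Prod>j<n. [:-Re (b * cis(2*pi*real j/real n)), 1:]) (r * cos phi))
     = 2 * Y * complex_of_real (r^n * cos (real n * phi) - Re (b^n)) / (2^n * Y)" .
  also have "\<dots> = complex_of_real ((r^n * cos (real n * phi) - Re (b^n)) / 2^(n-1))"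
  proof -
    have Y0: "Y \<noteq> 0" using b by (simp add: Y_def r_def)
    have "(2::complex)^n = 2 * 2^(n-1)" using n by (cases n) auto
    thus ?thesis using Y0 by (simp add: field_simps)
  qed
  finally show ?thesis unfolding r_def using of_real_eq_iff by blast
qed


theorem mainTheorem11:
  fixes n :: nat and A :: "nat \<Rightarrow> complex" and f :: "real poly"
  assumes "n \<ge> 2"
    and "regular_ngon_centered_origin n A"
    and "f = (\<Prod>k=1..n. [:- Re (A k), 1:])"
  shows "\<forall>j. 0 < j \<and> j < n \<and> odd (n - j) \<longrightarrow> coeff f j = 0"
proof -
  have n: "n > 0" using assms(1) by simp
  obtain \<sigma> :: real where A1: "A 1 \<noteq> 0" and sg: "\<sigma> = 1 \<or> \<sigma> = -1"
    and Ak: "\<forall>k\<in>{1..n}. A k = A 1 * cis (\<sigma> * 2 * pi * (real k - 1) / real n)"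
    using assms(2) unfolding regular_ngon_centered_origin_def by blast
  define b where "b = (if \<sigma> = 1 then A 1 else cnj (A 1))"
  have b0: "b \<noteq> 0" using A1 by (simp add: b_def)
  have ReA: "Re (A k) = Re (b * cis (2 * pi * (real k - 1) / real n))" if "k \<in> {1..n}" for k
  proof (cases "\<sigma> = 1")
    case True thus ?thesis using Ak[rule_format, OF that] by (simp add: b_def)
  next
    case False
    hence s: "\<sigma> = -1" using sg by simp
    have "Re (A k) = Re (cnj (A k))" by simp
    also have "cnj (A k) = cnj (A 1) * cis (2 * pi * (real k - 1) / real n)"
      using Ak[rule_format, OF that] s by (simp add: cis_cnj)
    finally show ?thesis using False by (simp add: b_def)
  qed
  have fdef: "f = (\<Prod>j<n. [:-Re (b * cis(2*pi*real j/real n)), 1:])"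
  proof -
    have "f = (\<Prod>k=1..n. [:- Re (b * cis (2 * pi * (real k - 1) / real n)), 1:])"
      unfolding assms(3) by (intro prod.cong refl) (simp add: ReA)
    also have "\<dots> = (\<Prod>j<n. [:-Re (b * cis(2*pi*real j/real n)), 1:])"
      by (simp add: prod.atLeast1_atMost_eq)
    finally show ?thesis .
  qed
  define r where "r = norm b"
  have r0: "r > 0" using b0 by (simp add: r_def)
  have ev: "poly f (r * cos phi) = (r^n * cos (real n * phi) - Re (b^n)) / 2^(n-1)" for phi
    using eval_f[OF n b0, of phi] by (simp add: fdef r_def)
  define D where "D = ((-1)^n - 1) * Re (b^n) / 2^(n-1)"
  define g where "g = pcompose f [:0, -1:] - smult ((-1)^n) f - [:D:]"
  have groot: "poly g x = 0" if "x \<in> {-r..r}" for x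
  proof -
    define phi where "phi = arccos (x / r)"
    have "-1 \<le> x / r" "x / r \<le> 1" using that r0 by (auto simp: field_simps)
    hence x: "x = r * cos phi" using r0 by (simp add: phi_def cos_arccos)
    have mx: "-x = r * cos (phi + pi)" using x by simp
    have cn: "cos (real n * (phi + pi)) = (-1)^n * cos (real n * phi)"
      by (simp add: distrib_left cos_add)
    have "poly g x = poly f (-x) - (-1)^n * poly f x - D"
      by (simp add: g_def poly_pcompose)
    also have "\<dots> = 0"
      unfolding mx unfolding x ev cn D_def
      by (simp add: field_simps)
    finally show ?thesis .
  qed
  have g0: "g = 0"
  proof (rule ccontr)
    assume "g \<noteq> 0"
    hence "finite {x. poly g x = 0}" by (rule poly_roots_finite)
    moreover have "{-r..r} \<subseteq> {x. poly g x = 0}" using groot by blast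
    ultimately have "finite {-r..r}" by (rule finite_subset[rotated])
    thus False using infinite_Icc[of "-r" r] r0 by simp
  qed
  show ?thesis
  proof (intro allI impI)
    fix j assume j: "0 < j \<and> j < n \<and> odd (n - j)"
    have "coeff g j = 0" using g0 by simp
    hence "(-1)^j * coeff f j - (-1)^n * coeff f j = 0"
      using j by (cases j) (simp_all add: g_def coeff_pcompose_linear)
    moreover have "(-1::real)^j = - ((-1)^n)"
    proof -
      have "n = j + (n - j)" using j by simp
      hence "(-1::real)^n = (-1)^j * (-1)^(n-j)" by (metis power_add)
      thus ?thesis using j by simp
    qed
    ultimately show "coeff f j = 0" by simp
  qed
qed

end
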